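(* Let $M\in\mathbb{R}_+^{p\times q}$ be a slack matrix of a polyhedral cone, let $k=\operatorname{rank}(M)$, and let $M=AB$ with $A\in\mathbb{R}^{p\times k}$, $B\in\mathbb{R}^{k\times q}$, $\operatorname{rank}(A)=\operatorname{rank}(B)=k$. Let $K\subseteq\mathbb{R}^k$ be the cone generated by the rows of $A$. Then $K=\{x\in\mathbb{R}^k : x^TB\ge 0\}$, i.e., the columns of $B$ form an $\mathcal{H}$-representation of $K$. In particular, $M$ is a slack matrix of $K$.
   Context: A matrix $S\in\mathbb{R}^{p\times q}$ is a slack matrix of a polyhedral cone $K\subseteq\mathbb{R}^n$ if there are matrices $A\in\mathbb{R}^{p\times n}$ and $B\in\mathbb{R}^{n\times q}$ with $K=\{x\in\mathbb{R}^n: x^TB\ge 0\}=\{y^TA: y\in\mathbb{R}_+^p\}$ (the columns of $B$ form an $\mathcal{H}$-representation, the rows of $A$ a $\mathcal{V}$-representation of $K$) and $S=AB$. A matrix is a slack matrix of a polyhedral cone if it is a slack matrix of some polyhedral cone. *)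

theory Defs
  imports "Jordan_Normal_Form.Matrix" "Jordan_Normal_Form.DL_Rank"
begin

(* H-cone {x in R^n : x^T B >= 0}: x^T B >= 0 means x . (column j of B) >= 0 for every column j *)
definition H_cone :: "nat \<Rightarrow> real mat \<Rightarrow> real vec set" where
  "H_cone n B = {x \<in> carrier_vec n. \<forall>j < dim_col B. x \<bullet> col B j \<ge> 0}"

(* V-cone {y^T A : y in R_+^p}: cone generated by the rows of A; y^T A = A^T *v y *)
definition V_cone :: "real mat \<Rightarrow> real vec set" where
  "V_cone A = {A\<^sup>T *\<^sub>v y | y. y \<in> carrier_vec (dim_row A) \<and> (\<forall>i < dim_row A. y $ i \<ge> 0)}"

definition slack_matrix_of :: "nat \<Rightarrow> real mat \<Rightarrow> real vec set \<Rightarrow> bool" where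
  "slack_matrix_of n S K \<longleftrightarrow>
     (\<exists>A B. A \<in> carrier_mat (dim_row S) n \<and> B \<in> carrier_mat n (dim_col S) \<and>
            K = H_cone n B \<and> K = V_cone A \<and> S = A * B)"

definition is_slack_matrix :: "real mat \<Rightarrow> bool" where
  "is_slack_matrix S \<longleftrightarrow> (\<exists>n K. slack_matrix_of n S K)"

end

theory Submission
  imports Defs
begin

lemma self_sp_zero:
  fixes v :: "real vec"
  assumes "v \<in> carrier_vec n" "v \<bullet> v = 0"
  shows "v = 0\<^sub>v n"
proof -
  have "(\<Sum>i\<in>{0..<n}. v $ i * v $ i) = 0" using assms unfolding scalar_prod_def by auto
  hence "\<forall>i\<in>{0..<n}. v $ i * v $ i = 0"
    by (subst (asm) sum_nonneg_eq_0_iff) auto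
  thus ?thesis using assms by (intro eq_vecI) auto
qed

lemma (in vec_space) max_indep_exists:
  shows "\<exists>S. maximal S (\<lambda>T. T \<subseteq> set (cols A) \<and> lin_indpt T)"
proof -
  show ?thesis
    using maximal_exists[of "(\<lambda>T. T \<subseteq> set (cols A) \<and> lin_indpt T)" "card (set (cols A))" "{}"]
    by (meson List.finite_set card_mono empty_iff empty_subsetI finite_lin_indpt2 rev_finite_subset)
qed

lemma full_col_rank_ker:
  fixes A :: "real mat"
  assumes A: "A \<in> carrier_mat n m" and r: "vec_space.rank n A = m"
    and z: "z \<in> carrier_vec m" and Az: "A *\<^sub>v z = 0\<^sub>v n"
  shows "z = 0\<^sub>v m"
proof -
  interpret vec_space "TYPE(real)" n .
  obtain S where S: "maximal S (\<lambda>T. T \<subseteq> set (cols A) \<and> lin_indpt T)"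
    using max_indep_exists by blast
  have cS: "card S = m" using rank_card_indpt[OF A S] r by simp
  have Ssub: "S \<subseteq> set (cols A)" using S unfolding maximal_def by blast
  have "card (set (cols A)) \<le> m" using A card_length[of "cols A"] by simp
  moreover have "card S \<le> card (set (cols A))" using Ssub card_mono by blast
  ultimately have cc: "card (set (cols A)) = m" using cS by linarith
  hence dist: "distinct (cols A)" using A card_distinct[of "cols A"] by simp
  have "S = set (cols A)" using Ssub cc cS by (metis List.finite_set card_subset_eq)
  hence li: "lin_indpt (set (cols A))" using S unfolding maximal_def by blast
  show ?thesis
  proof (rule ccontr)
    assume "z \<noteq> 0\<^sub>v m"
    from lin_depI[OF A z this Az dist] li show False by blast
  qed
qed

lemma full_row_rank_ker:
  fixes B :: "real mat"
  assumes B: "B \<in> carrier_mat k q" and r: "vec_space.rank k B = k"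
    and x: "x \<in> carrier_vec k" and orth: "\<forall>j < q. x \<bullet> col B j = 0"
  shows "x = 0\<^sub>v k"
proof -
  interpret vec_space "TYPE(real)" k .
  obtain S where S: "maximal S (\<lambda>T. T \<subseteq> set (cols B) \<and> lin_indpt T)"
    using max_indep_exists by blast
  have cS: "card S = k" using rank_card_indpt[OF B S] r by simp
  have Ssub: "S \<subseteq> set (cols B)" using S unfolding maximal_def by blast
  have li: "lin_indpt S" using S unfolding maximal_def by blast
  have fS: "finite S" using Ssub finite_subset by blast
  obtain xs where xs: "set xs = S" "distinct xs" using finite_distinct_list[OF fS] by blast
  have lxs: "length xs = k" using distinct_card[OF xs(2)] xs(1) cS by simp
  have "set (cols B) \<subseteq> carrier_vec k" using cols_dim[of B] B by simp
  hence xsk: "set xs \<subseteq> carrier_vec k" using xs(1) Ssub by simp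
  define C where "C = mat_of_cols k xs"
  have C: "C \<in> carrier_mat k k" unfolding C_def using mat_of_cols_carrier(1)[of k xs] lxs by simp
  have colsC: "cols C = xs" unfolding C_def by (rule cols_mat_of_cols[OF xsk])
  have dC: "distinct (cols C)" using colsC xs by simp
  have liC: "lin_indpt (set (cols C))" using colsC xs li by simp
  have "rank C = k" by (rule lin_indpt_full_rank[OF C dC liC])
  hence "det C \<noteq> 0" using det_rank_iff[OF C] by blast
  hence dCT: "det (transpose_mat C) \<noteq> 0" using det_transpose[OF C] by simp
  have "transpose_mat C *\<^sub>v x = 0\<^sub>v k"
  proof (rule eq_vecI)
    fix i assume "i < dim_vec (0\<^sub>v k :: real vec)"
    hence i: "i < k" by simp
    have "xs ! i \<in> set (cols B)" using xs i lxs Ssub by auto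
    then obtain j where j: "j < length (cols B)" "xs ! i = cols B ! j"
      by (auto simp: in_set_conv_nth)
    hence j2: "j < q" "xs ! i = col B j" using B by auto
    have "(transpose_mat C *\<^sub>v x) $ i = row (transpose_mat C) i \<bullet> x" using C i by simp
    also have "row (transpose_mat C) i = col C i" using C i by simp
    also have "col C i = xs ! i" using colsC i C cols_nth[of i C] by simp
    also have "xs ! i \<bullet> x = x \<bullet> col B j" unfolding j2(2)
      by (rule comm_scalar_prod[of _ k], use B j2 x in auto)
    also have "\<dots> = 0" using orth j2 by simp
    finally show "(transpose_mat C *\<^sub>v x) $ i = 0\<^sub>v k $ i" using i by simp
  qed (use C in simp)
  moreover have "transpose_mat C \<in> carrier_mat k k" using C by simp
  ultimately show ?thesis using dCT det_0_iff_vec_prod_zero_field[of "transpose_mat C" k] x by blast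
qed


theorem lemma2p5:
  fixes M A B :: "real mat" and p q k :: nat and K :: "real vec set"
  assumes "M \<in> carrier_mat p q"
    and "\<forall>i < p. \<forall>j < q. M $$ (i, j) \<ge> 0"
    and "is_slack_matrix M"
    and "k = vec_space.rank p M"
    and "A \<in> carrier_mat p k" and "B \<in> carrier_mat k q"
    and "vec_space.rank p A = k" and "vec_space.rank k B = k"
    and "M = A * B"
    and "K = V_cone A"
  shows "K = H_cone k B \<and> slack_matrix_of k M K"
proof -
  note Ac = assms(5) and Bc = assms(6) and Mc = assms(9)
  from assms(3) obtain n K' A' B' where A': "A' \<in> carrier_mat (dim_row M) n"
    and B': "B' \<in> carrier_mat n (dim_col M)" and KH: "K' = H_cone n B'"
    and KV: "K' = V_cone A'" and MAB: "M = A' * B'"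
    unfolding is_slack_matrix_def slack_matrix_of_def by blast
  have dM: "dim_row M = p" "dim_col M = q" using assms(1) by auto
  hence A'c: "A' \<in> carrier_mat p n" and B'c: "B' \<in> carrier_mat n q" using A' B' by auto
  have colM: "\<And>j. j < q \<Longrightarrow> col M j = A *\<^sub>v col B j" using Ac Bc Mc by (metis col_mult2)
  have colM': "\<And>j. j < q \<Longrightarrow> col M j = A' *\<^sub>v col B' j" using A'c B'c MAB by (metis col_mult2)
  have tr: "\<And>w j. w \<in> carrier_vec p \<Longrightarrow> j < q \<Longrightarrow> (A\<^sup>T *\<^sub>v w) \<bullet> col B j = w \<bullet> col M j"
  proof -
    fix w :: "real vec" and j :: nat assume w: "w \<in> carrier_vec p" and j: "j < q"
    have "col B j \<in> carrier_vec k" using Bc j by simp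
    from transpose_vec_mult_scalar[OF Ac this w] colM[OF j]
    show "(A\<^sup>T *\<^sub>v w) \<bullet> col B j = w \<bullet> col M j" by simp
  qed
  have tr': "\<And>w j. w \<in> carrier_vec p \<Longrightarrow> j < q \<Longrightarrow> (A'\<^sup>T *\<^sub>v w) \<bullet> col B' j = w \<bullet> col M j"
  proof -
    fix w :: "real vec" and j :: nat assume w: "w \<in> carrier_vec p" and j: "j < q"
    have "col B' j \<in> carrier_vec n" using B'c j by simp
    from transpose_vec_mult_scalar[OF A'c this w] colM'[OF j]
    show "(A'\<^sup>T *\<^sub>v w) \<bullet> col B' j = w \<bullet> col M j" by simp
  qed
  have ATc: "A\<^sup>T \<in> carrier_mat k p" using Ac by simp
  have A'Tc: "A'\<^sup>T \<in> carrier_mat n p" using A'c by simp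
  have V_sub: "V_cone A \<subseteq> H_cone k B"
  proof
    fix x assume "x \<in> V_cone A"
    then obtain y where x: "x = A\<^sup>T *\<^sub>v y" and y: "y \<in> carrier_vec p" and yp: "\<forall>i < p. y $ i \<ge> 0"
      unfolding V_cone_def using Ac by auto
    have xc: "x \<in> carrier_vec k" unfolding x by (rule mult_mat_vec_carrier[OF ATc y])
    have "\<forall>j < dim_col B. x \<bullet> col B j \<ge> 0"
    proof (intro allI impI)
      fix j assume "j < dim_col B"
      hence j: "j < q" using Bc by simp
      have "x \<bullet> col B j = y \<bullet> col M j" using tr[OF y j] x by simp
      also have "\<dots> = (\<Sum>i\<in>{0..<p}. y $ i * M $$ (i, j))"
        unfolding scalar_prod_def using y assms(1) j by (intro sum.cong) auto
      also have "\<dots> \<ge> 0" using yp assms(2) j by (intro sum_nonneg) auto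
      finally show "x \<bullet> col B j \<ge> 0" .
    qed
    thus "x \<in> H_cone k B" by (simp add: H_cone_def xc)
  qed
  have H_sub: "H_cone k B \<subseteq> V_cone A"
  proof
    fix x assume "x \<in> H_cone k B"
    hence xc: "x \<in> carrier_vec k" and xpos: "\<forall>j < q. x \<bullet> col B j \<ge> 0"
      unfolding H_cone_def using Bc by auto
    define G where "G = A\<^sup>T * A"
    have Gc: "G \<in> carrier_mat k k" unfolding G_def by (rule mult_carrier_mat[OF ATc Ac])
    have "det G \<noteq> 0"
    proof
      assume "det G = 0"
      then obtain z where z: "z \<in> carrier_vec k" "z \<noteq> 0\<^sub>v k" "G *\<^sub>v z = 0\<^sub>v k"
        using det_0_iff_vec_prod_zero_field[OF Gc] by blast
      have Az: "A *\<^sub>v z \<in> carrier_vec p" using Ac z by simp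
      have "G *\<^sub>v z = A\<^sup>T *\<^sub>v (A *\<^sub>v z)" unfolding G_def
        by (rule assoc_mult_mat_vec[OF ATc Ac z(1)])
      hence "A\<^sup>T *\<^sub>v (A *\<^sub>v z) = 0\<^sub>v k" using z(3) by simp
      hence "(A\<^sup>T *\<^sub>v (A *\<^sub>v z)) \<bullet> z = 0" using z(1) by simp
      hence "(A *\<^sub>v z) \<bullet> (A *\<^sub>v z) = 0" using transpose_vec_mult_scalar[OF Ac z(1) Az] by simp
      hence "A *\<^sub>v z = 0\<^sub>v p" using self_sp_zero Az by blast
      hence "z = 0\<^sub>v k" using full_col_rank_ker[OF Ac assms(7) z(1)] by blast
      thus False using z by blast
    qed
    from det_non_zero_imp_unit[OF Gc this, unfolded Units_def, of "()"]
    obtain Gi where Gi: "Gi \<in> carrier_mat k k" and GGi: "G * Gi = 1\<^sub>m k"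
      by (auto simp: ring_mat_def)
    define w where "w = A *\<^sub>v (Gi *\<^sub>v x)"
    have Gix: "Gi *\<^sub>v x \<in> carrier_vec k" by (rule mult_mat_vec_carrier[OF Gi xc])
    have wc: "w \<in> carrier_vec p" unfolding w_def by (rule mult_mat_vec_carrier[OF Ac Gix])
    have "A\<^sup>T *\<^sub>v w = G *\<^sub>v (Gi *\<^sub>v x)" unfolding w_def G_def
      by (rule assoc_mult_mat_vec[OF ATc Ac Gix, symmetric])
    also have "\<dots> = (G * Gi) *\<^sub>v x" using Gc Gi xc by simp
    also have "\<dots> = x" using GGi xc by simp
    finally have Atw: "A\<^sup>T *\<^sub>v w = x" .
    define u where "u = A'\<^sup>T *\<^sub>v w"
    have uc: "u \<in> carrier_vec n" unfolding u_def by (rule mult_mat_vec_carrier[OF A'Tc wc])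
    have ucol: "u \<bullet> col B' j = x \<bullet> col B j" if j: "j < q" for j
    proof -
      have "u \<bullet> col B' j = w \<bullet> col M j" unfolding u_def by (rule tr'[OF wc j])
      also have "\<dots> = (A\<^sup>T *\<^sub>v w) \<bullet> col B j" by (rule tr[OF wc j, symmetric])
      finally show ?thesis using Atw by simp
    qed
    have "u \<in> H_cone n B'" unfolding H_cone_def using uc ucol xpos B'c by auto
    hence "u \<in> V_cone A'" using KH KV by simp
    then obtain y where uy: "u = A'\<^sup>T *\<^sub>v y" and y: "y \<in> carrier_vec p" and yp: "\<forall>i < p. y $ i \<ge> 0"
      unfolding V_cone_def using A'c by auto
    define d where "d = A\<^sup>T *\<^sub>v y - x"
    have Aty: "A\<^sup>T *\<^sub>v y \<in> carrier_vec k" by (rule mult_mat_vec_carrier[OF ATc y])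
    have dc: "d \<in> carrier_vec k" unfolding d_def using Aty xc by simp
    have "\<forall>j < q. d \<bullet> col B j = 0"
    proof (intro allI impI)
      fix j assume j: "j < q"
      have cB: "col B j \<in> carrier_vec k" using Bc j by simp
      have "d \<bullet> col B j = (A\<^sup>T *\<^sub>v y) \<bullet> col B j - x \<bullet> col B j"
        unfolding d_def by (rule minus_scalar_prod_distrib[OF Aty xc cB])
      also have "(A\<^sup>T *\<^sub>v y) \<bullet> col B j = y \<bullet> col M j" using tr[OF y j] .
      also have "\<dots> = u \<bullet> col B' j" using tr'[OF y j] uy by simp
      also have "\<dots> = x \<bullet> col B j" using ucol[OF j] .
      finally show "d \<bullet> col B j = 0" by simp
    qed
    hence "d = 0\<^sub>v k" using full_row_rank_ker[OF Bc assms(8) dc] by blast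
    hence "A\<^sup>T *\<^sub>v y = x"
    proof (intro eq_vecI)
      fix i assume "d = 0\<^sub>v k" "i < dim_vec x"
      hence "d $ i = 0" "i < k" using xc by auto
      thus "(A\<^sup>T *\<^sub>v y) $ i = x $ i" unfolding d_def using xc by simp
    qed (use Aty xc Ac in simp)
    thus "x \<in> V_cone A" unfolding V_cone_def using y yp Ac by auto
  qed
  have KHB: "K = H_cone k B" using V_sub H_sub assms(10) by blast
  moreover have "slack_matrix_of k M K" unfolding slack_matrix_of_def
    using Ac Bc dM KHB assms(10) Mc by auto
  ultimately show ?thesis by blast
qed

end
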